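(* Let $0\le\alpha<1$ and let $r_0=r_0(\alpha)$ be the real root in $(0,1)$ of the equation \[2(1-\alpha)(1-r)^4=1-\alpha+4r+(1+\alpha)r^2.\] Let $\mathcal{F}$ be the class of analytic functions $f(z)=z+\sum_{n\ge2}a_nz^n$ on $\mathbb{D}$ with $|a_n|\le n$ for all $n\ge2$. Then every $f\in\mathcal{F}$ satisfies $\left|\frac{zf''(z)}{f'(z)}\right|\le1-\alpha$ for $|z|\le r_0$; $r_0(\alpha)$ is the radius of convexity of order $\alpha$ of $\mathcal{F}$; and $r_0(1/2)\approx0.064723$ is the radius of uniform convexity of $\mathcal{F}$. All results are sharp (in particular $r_0$ in the first statement cannot be replaced by any larger number).
   Context: $\mathbb{D}=\{z\in\mathbb{C}:|z|<1\}$. For a class $\mathcal{F}$ of analytic functions on $\mathbb{D}$ normalized by $f(0)=0$, $f'(0)=1$, and $0\le\alpha<1$, the radius of convexity of order $\alpha$ of $\mathcal{F}$ is the supremum of $r\in(0,1]$ such that every $f\in\mathcal{F}$ satisfies $f'(z)\ne0$ and $\operatorname{Re}\big(1+zf''(z)/f'(z)\big)>\alpha$ for $|z|<r$. The radius of uniform convexity of $\mathcal{F}$ is the supremum of $r\in(0,1]$ such that every $f\in\mathcal{F}$ satisfies $f'(z)\ne0$ and $\operatorname{Re}\big(1+zf''(z)/f'(z)\big)>\left|zf''(z)/f'(z)\right|$ for $|z|<r$. *)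

theory Defs
  imports "HOL-Analysis.Analysis"
begin

definition classF :: "(complex \<Rightarrow> complex) set" where
  "classF = {f. f holomorphic_on ball 0 1 \<and> f 0 = 0 \<and> deriv f 0 = 1 \<and>
     (\<forall>n\<ge>2. norm ((deriv ^^ n) f 0 / of_nat (fact n)) \<le> real n)}"

definition radius_convexity_order :: "(complex \<Rightarrow> complex) set \<Rightarrow> real \<Rightarrow> real" where
  "radius_convexity_order F \<alpha> = Sup {r \<in> {0<..1}. \<forall>f\<in>F. \<forall>z\<in>ball 0 r.
     deriv f z \<noteq> 0 \<and> Re (1 + z * deriv (deriv f) z / deriv f z) > \<alpha>}"

definition radius_uniform_convexity :: "(complex \<Rightarrow> complex) set \<Rightarrow> real" where
  "radius_uniform_convexity F = Sup {r \<in> {0<..1}. \<forall>f\<in>F. \<forall>z\<in>ball 0 r.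
     deriv f z \<noteq> 0 \<and>
     Re (1 + z * deriv (deriv f) z / deriv f z) > norm (z * deriv (deriv f) z / deriv f z)}"

definition r0 :: "real \<Rightarrow> real" where
  "r0 \<alpha> = (THE r. 0 < r \<and> r < 1 \<and>
      2 * (1 - \<alpha>) * (1 - r) ^ 4 = 1 - \<alpha> + 4 * r + (1 + \<alpha>) * r ^ 2)"

end

theory Submission
  imports Defs "HOL-Complex_Analysis.Complex_Analysis"
begin


lemma sums_A2:
  fixes z :: "'a :: {real_normed_field,banach}" assumes "norm z < 1"
  shows "(\<lambda>n. of_nat ((n+1)*(n+2)) * z ^ n) sums (2 / (1 - z)^3)"
proof -
  have "(\<lambda>n. diffs (\<lambda>n. of_nat (Suc n)) n * z^n) sums (2 / (1 - z)^3)"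
  proof (rule termdiffs_sums_strong[where K=1])
    fix z :: 'a assume "norm z < 1"
    thus "(\<lambda>n. of_nat (Suc n) * z^n) sums (1 / (1 - z)^2)" by (rule geometric_deriv_sums)
  next
    have "z \<noteq> 1" using assms by auto
    then have w: "1 - z \<noteq> 0" by simp
    show "((\<lambda>z. 1 / (1 - z)^2) has_field_derivative 2 / (1 - z)^3) (at z)"
      apply (rule derivative_eq_intros refl)+
      using w apply simp
      using w apply (simp add: divide_simps; simp add: algebra_simps eval_nat_numeral)
      done
  qed (use assms in auto)
  thus ?thesis unfolding diffs_def by (simp add: algebra_simps)
qed

lemma sums_A3:
  fixes z :: "'a :: {real_normed_field,banach}" assumes "norm z < 1"
  shows "(\<lambda>n. of_nat ((n+1)*(n+2)*(n+3)) * z ^ n) sums (6 / (1 - z)^4)"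
proof -
  have "(\<lambda>n. diffs (\<lambda>n. of_nat ((n+1)*(n+2))) n * z^n) sums (6 / (1 - z)^4)"
  proof (rule termdiffs_sums_strong[where K=1])
    fix z :: 'a assume "norm z < 1"
    thus "(\<lambda>n. of_nat ((n+1)*(n+2)) * z^n) sums (2 / (1 - z)^3)" by (rule sums_A2)
  next
    have "z \<noteq> 1" using assms by auto
    then have w: "1 - z \<noteq> 0" by simp
    show "((\<lambda>z. 2 / (1 - z)^3) has_field_derivative 6 / (1 - z)^4) (at z)"
      apply (rule derivative_eq_intros refl)+
      using w apply simp
      using w apply (simp add: divide_simps; simp add: algebra_simps eval_nat_numeral)
      done
  qed (use assms in auto)
  thus ?thesis unfolding diffs_def by (simp add: algebra_simps)
qed

lemma sums_sq:
  fixes x :: real assumes "0 \<le> x" "x < 1"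
  shows "(\<lambda>n. (real n + 1)^2 * x ^ n) sums ((1 + x) / (1 - x)^3)"
proof -
  have a: "(\<lambda>n. of_nat ((n+1)*(n+2)) * x ^ n) sums (2 / (1 - x)^3)"
    using assms by (intro sums_A2) auto
  have b: "(\<lambda>n. of_nat (Suc n) * x ^ n) sums (1 / (1 - x)^2)"
    using assms by (intro geometric_deriv_sums) auto
  have "(\<lambda>n. of_nat ((n+1)*(n+2)) * x ^ n - of_nat (Suc n) * x ^ n) sums (2 / (1 - x)^3 - 1 / (1 - x)^2)"
    by (rule sums_diff[OF a b])
  moreover have "2 / (1 - x)^3 - 1 / (1 - x)^2 = (1 + x) / (1 - x)^3"
    using assms by (simp add: divide_simps) (simp add: algebra_simps eval_nat_numeral)
  moreover have "\<And>n. of_nat ((n+1)*(n+2)) * x ^ n - of_nat (Suc n) * x ^ n = (real n + 1)^2 * x ^ n"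
    by (simp add: algebra_simps power2_eq_square)
  ultimately show ?thesis by simp
qed

lemma sums_cub:
  fixes x :: real assumes "0 \<le> x" "x < 1"
  shows "(\<lambda>n. (real n + 2)^2 * (real n + 1) * x ^ n) sums ((4 + 2 * x) / (1 - x)^4)"
proof -
  have a: "(\<lambda>n. of_nat ((n+1)*(n+2)*(n+3)) * x ^ n) sums (6 / (1 - x)^4)"
    using assms by (intro sums_A3) auto
  have b: "(\<lambda>n. of_nat ((n+1)*(n+2)) * x ^ n) sums (2 / (1 - x)^3)"
    using assms by (intro sums_A2) auto
  have "(\<lambda>n. of_nat ((n+1)*(n+2)*(n+3)) * x ^ n - of_nat ((n+1)*(n+2)) * x ^ n) sums (6 / (1 - x)^4 - 2 / (1 - x)^3)"
    by (rule sums_diff[OF a b])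
  moreover have "6 / (1 - x)^4 - 2 / (1 - x)^3 = (4 + 2 * x) / (1 - x)^4"
    using assms by (simp add: divide_simps) (simp add: algebra_simps eval_nat_numeral)
  moreover have "\<And>n. of_nat ((n+1)*(n+2)*(n+3)) * x ^ n - of_nat ((n+1)*(n+2)) * x ^ n = (real n + 2)^2 * (real n + 1) * x ^ n"
    by (simp add: algebra_simps power2_eq_square)
  ultimately show ?thesis by simp
qed



definition gg :: "real \<Rightarrow> real \<Rightarrow> real" where
  "gg a r = 2 * (1 - a) * (1 - r) ^ 4 - (1 - a + 4 * r + (1 + a) * r ^ 2)"

lemma gg_strict:
  assumes "0 \<le> a" "a < 1" "0 \<le> x" "x < y" "y \<le> 1"
  shows "gg a y < gg a x"
proof -
  have "(1 - y) ^ 4 \<le> (1 - x) ^ 4" using assms by (intro power_mono) auto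
  hence "2 * (1 - a) * (1 - y) ^ 4 \<le> 2 * (1 - a) * (1 - x) ^ 4"
    using assms by (intro mult_left_mono) auto
  moreover have "(1 + a) * x ^ 2 \<le> (1 + a) * y ^ 2"
    using assms by (intro mult_left_mono power_mono) auto
  ultimately show ?thesis using assms unfolding gg_def by linarith
qed

lemma r0_props:
  assumes "0 \<le> a" "a < 1"
  shows "0 < r0 a \<and> r0 a < 1 \<and> gg a (r0 a) = 0"
proof -
  have cont: "continuous_on {0..1} (gg a)" unfolding gg_def by (intro continuous_intros)
  have "gg a 1 \<le> 0" "0 \<le> gg a 0" using assms by (auto simp: gg_def)
  from IVT2'[of "gg a" 1 0 0, OF this _ cont] obtain x where x: "0 \<le> x" "x \<le> 1" "gg a x = 0"
    by auto
  have x0: "x \<noteq> 0" using x assms by (auto simp: gg_def)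
  have x1: "x \<noteq> 1" using x assms by (auto simp: gg_def)
  have P: "0 < x \<and> x < 1 \<and> 2 * (1 - a) * (1 - x) ^ 4 = 1 - a + 4 * x + (1 + a) * x ^ 2"
    using x x0 x1 by (auto simp: gg_def)
  have uniq: "y = x" if "0 < y \<and> y < 1 \<and> 2 * (1 - a) * (1 - y) ^ 4 = 1 - a + 4 * y + (1 + a) * y ^ 2" for y
  proof -
    have gy: "gg a y = 0" using that by (simp add: gg_def)
    show ?thesis
    proof (rule ccontr)
      assume "y \<noteq> x"
      then consider "y < x" | "x < y" by linarith
      thus False
        using gg_strict[OF assms, of y x] gg_strict[OF assms, of x y] that x gy by cases auto
    qed
  qed
  have "r0 a = x" unfolding r0_def using P uniq by (rule the_equality)
  thus ?thesis using P x by simp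
qed

lemma r0_iff_le:
  assumes "0 \<le> a" "a < 1" "0 \<le> x" "x \<le> 1"
  shows "0 \<le> gg a x \<longleftrightarrow> x \<le> r0 a" and "0 < gg a x \<longleftrightarrow> x < r0 a"
proof -
  have r: "0 < r0 a" "r0 a < 1" "gg a (r0 a) = 0" using r0_props[OF assms(1,2)] by auto
  show "0 \<le> gg a x \<longleftrightarrow> x \<le> r0 a"
    using gg_strict[OF assms(1,2), of x "r0 a"] gg_strict[OF assms(1,2), of "r0 a" x] r assms
    by (cases x "r0 a" rule: linorder_cases) auto
  show "0 < gg a x \<longleftrightarrow> x < r0 a"
    using gg_strict[OF assms(1,2), of x "r0 a"] gg_strict[OF assms(1,2), of "r0 a" x] r assms
    by (cases x "r0 a" rule: linorder_cases) auto
qed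

lemma r0_small:
  assumes "0 \<le> a" "a < 1"
  shows "r0 a < 1/10"
proof -
  have "gg a (1/10) < 0" using assms by (simp add: gg_def eval_nat_numeral field_simps)
  thus ?thesis using r0_iff_le(1)[OF assms, of "1/10"] r0_props[OF assms] by auto
qed

lemma r0_half: "0.0647225 < r0 (1/2) \<and> r0 (1/2) < 0.0647235"
proof -
  have "0 < gg (1/2) 0.0647225" by (simp add: gg_def eval_nat_numeral)
  moreover have "gg (1/2) 0.0647235 < 0" by (simp add: gg_def eval_nat_numeral)
  ultimately show ?thesis
    using r0_iff_le(2)[of "1/2" "0.0647225"] r0_iff_le(1)[of "1/2" "0.0647235"] by auto
qed

definition pp :: "real \<Rightarrow> real" where "pp r = 2 - (1 + r) / (1 - r) ^ 3"
definition qq :: "real \<Rightarrow> real" where "qq r = (4 + 2 * r) / (1 - r) ^ 4"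

lemma pq_ident:
  assumes "0 \<le> r" "r < 1"
  shows "(1 - a) * pp r * (1 - r) ^ 4 = gg a r + 4 * r + 2 * r ^ 2"
    and "r * qq r * (1 - r) ^ 4 = 4 * r + 2 * r ^ 2"
proof -
  have w: "1 - r \<noteq> 0" using assms by simp
  show "(1 - a) * pp r * (1 - r) ^ 4 = gg a r + 4 * r + 2 * r ^ 2"
    using w unfolding pp_def gg_def by (simp add: divide_simps; simp add: algebra_simps eval_nat_numeral)
  show "r * qq r * (1 - r) ^ 4 = 4 * r + 2 * r ^ 2"
    using w unfolding qq_def by (simp add: divide_simps; simp add: algebra_simps eval_nat_numeral)
qed

lemma pq_le:
  assumes "0 \<le> a" "a < 1" "0 \<le> r" "r < 1"
  shows "0 \<le> gg a r \<longleftrightarrow> r * qq r \<le> (1 - a) * pp r"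
    and "0 < gg a r \<longleftrightarrow> r * qq r < (1 - a) * pp r"
    and "0 \<le> gg a r \<Longrightarrow> 0 < pp r"
proof -
  have c: "0 < (1 - r) ^ 4" using assms by simp
  note i = pq_ident(1)[OF assms(3,4), of a] pq_ident(2)[OF assms(3,4)]
  show "0 \<le> gg a r \<longleftrightarrow> r * qq r \<le> (1 - a) * pp r"
  proof -
    have "r * qq r \<le> (1 - a) * pp r \<longleftrightarrow> r * qq r * (1 - r) ^ 4 \<le> (1 - a) * pp r * (1 - r) ^ 4"
      using c by simp
    thus ?thesis using i by linarith
  qed
  show "0 < gg a r \<longleftrightarrow> r * qq r < (1 - a) * pp r"
  proof -
    have "r * qq r < (1 - a) * pp r \<longleftrightarrow> r * qq r * (1 - r) ^ 4 < (1 - a) * pp r * (1 - r) ^ 4"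
      using c by simp
    thus ?thesis using i by linarith
  qed
  assume g: "0 \<le> gg a r"
  have "0 < gg a r + 4 * r + 2 * r ^ 2"
  proof (cases "r = 0")
    case True thus ?thesis using assms by (simp add: gg_def)
  next
    case False thus ?thesis using assms g by (simp add: add_nonneg_pos)
  qed
  hence "0 < (1 - a) * pp r * (1 - r) ^ 4" using i by simp
  thus "0 < pp r" using assms c by (simp add: zero_less_mult_iff)
qed

lemma pp_pos_small:
  assumes "0 \<le> x" "x \<le> 1/10"
  shows "0 < pp x"
proof -
  have "(9/10::real) ^ 3 \<le> (1 - x) ^ 3" using assms by (intro power_mono) auto
  moreover have "(9/10::real)^3 = 729/1000" by (simp add: eval_nat_numeral)
  ultimately have "1 + x < 2 * (1 - x) ^ 3" using assms by linarith
  moreover have "0 < (1 - x) ^ 3" using assms by simp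
  ultimately show ?thesis unfolding pp_def by (simp add: field_simps)
qed



definition FF :: "complex \<Rightarrow> complex" where "FF z = 2 * z - z / (1 - z)^2"
definition F1 :: "complex \<Rightarrow> complex" where "F1 z = 2 - (1 + z) / (1 - z)^3"
definition F2 :: "complex \<Rightarrow> complex" where "F2 z = - ((4 + 2 * z) / (1 - z)^4)"

lemma FF_has_deriv: assumes "z \<noteq> 1" shows "(FF has_field_derivative F1 z) (at z)"
proof -
  have w: "1 - z \<noteq> 0" using assms by simp
  show ?thesis unfolding FF_def[abs_def] F1_def
    apply (rule DERIV_cong)
     apply (rule derivative_intros)+
    using w apply (simp_all add: divide_simps)
    apply (simp add: algebra_simps eval_nat_numeral)
    done
qed

lemma F1_has_deriv: assumes "z \<noteq> 1" shows "(F1 has_field_derivative F2 z) (at z)"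
proof -
  have w: "1 - z \<noteq> 0" using assms by simp
  show ?thesis unfolding F1_def[abs_def] F2_def
    apply (rule DERIV_cong)
     apply (rule derivative_intros)+
    using w apply (simp_all add: divide_simps)
    apply (simp add: algebra_simps eval_nat_numeral)
    done
qed

lemma deriv_FF: "norm z < 1 \<Longrightarrow> deriv FF z = F1 z"
  by (intro DERIV_imp_deriv FF_has_deriv) auto

lemma deriv2_FF: assumes "norm z < 1" shows "deriv (deriv FF) z = F2 z"
proof -
  have "(deriv FF has_field_derivative F2 z) (at z)"
  proof (rule has_field_derivative_transform_within_open[where S="ball 0 1" and f=F1])
    show "(F1 has_field_derivative F2 z) (at z)" using assms by (intro F1_has_deriv) auto
  qed (use assms deriv_FF in auto)
  thus ?thesis by (rule DERIV_imp_deriv)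
qed

lemma FF_sums:
  assumes "norm (z::complex) < 1"
  shows "(\<lambda>n. (if n = 1 then 1 else - of_nat n) * z ^ n) sums FF z"
proof -
  have "(\<lambda>n. of_nat (Suc n) * z ^ n) sums (1 / (1 - z)^2)" using assms by (rule geometric_deriv_sums)
  hence "(\<lambda>n. z * (of_nat (Suc n) * z ^ n)) sums (z * (1 / (1 - z)^2))" by (rule sums_mult)
  hence "(\<lambda>n. of_nat (Suc n) * z ^ Suc n) sums (z / (1 - z)^2)" by (simp add: algebra_simps)
  hence a: "(\<lambda>n. of_nat n * z ^ n) sums (z / (1 - z)^2)"
    using sums_Suc_iff[of "\<lambda>n. of_nat n * z ^ n" "z / (1 - z)^2"] by simp
  have b: "(\<lambda>n. if n = 1 then 2 * z else 0) sums (2 * z)"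
    using sums_single[of 1 "\<lambda>_. 2 * z"] by simp
  have "(\<lambda>n. (if n = 1 then 2 * z else 0) - of_nat n * z ^ n) sums (2 * z - z / (1 - z)^2)"
    by (rule sums_diff[OF b a])
  moreover have "\<And>n. (if n = 1 then 2 * z else 0) - of_nat n * z ^ n = (if n = 1 then 1 else - of_nat n) * z ^ n"
    by auto
  ultimately show ?thesis by (simp add: FF_def)
qed

lemma FF_coeffs: "(deriv ^^ n) FF 0 / fact n = (if n = 1 then 1 else - of_nat n)"
proof -
  define G where "G = Abs_fps (\<lambda>n. (if n = 1 then 1 else - of_nat n) :: complex)"
  have "FF has_fps_expansion G"
    unfolding has_fps_expansion_def
  proof
    have "summable (\<lambda>n. fps_nth G n * (1/2 :: complex) ^ n)"
      using FF_sums[of "1/2"] by (auto simp: G_def sums_iff)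
    hence "conv_radius (fps_nth G) \<ge> norm (1/2 :: complex)" by (rule conv_radius_geI)
    thus "0 < fps_conv_radius G" unfolding fps_conv_radius_def
      by (rule less_le_trans[rotated]) simp
  next
    have "eventually (\<lambda>z. z \<in> ball 0 1) (nhds (0::complex))"
      by (rule eventually_nhds_in_open) auto
    thus "\<forall>\<^sub>F z in nhds 0. eval_fps G z = FF z"
    proof (rule eventually_mono)
      fix z :: complex assume "z \<in> ball 0 1"
      hence "(\<lambda>n. fps_nth G n * z ^ n) sums FF z" using FF_sums[of z] by (simp add: G_def)
      thus "eval_fps G z = FF z" unfolding eval_fps_def by (rule sums_unique[symmetric])
    qed
  qed
  from fps_nth_fps_expansion[OF this, of n] show ?thesis by (simp add: G_def)
qed

lemma FF_in: "FF \<in> classF"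
  unfolding classF_def
proof (intro CollectI conjI allI impI)
  show "FF holomorphic_on ball 0 1"
  proof -
    have "(1 - z)^2 \<noteq> 0" if "z \<in> ball 0 1" for z :: complex using that by auto
    thus ?thesis unfolding FF_def[abs_def] by (intro holomorphic_intros) auto
  qed
  show "FF 0 = 0" by (simp add: FF_def)
  show "deriv FF 0 = 1" by (simp add: deriv_FF F1_def)
  fix n :: nat assume "2 \<le> n"
  thus "norm ((deriv ^^ n) FF 0 / of_nat (fact n)) \<le> real n"
    using FF_coeffs[of n] by (simp add: norm_minus_commute)
qed

lemma F12_real:
  assumes "0 \<le> x" "x < 1"
  shows "F1 (of_real x) = of_real (pp x)" "F2 (of_real x) = - of_real (qq x)"
  unfolding F1_def F2_def pp_def qq_def by simp_all



lemma deriv_funpow_shift: "(deriv ^^ n) (deriv f) = (deriv ^^ (Suc n)) f"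
  by (simp add: funpow_Suc_right del: funpow.simps)

lemma norm_fact_complex: "norm (fact m :: complex) = fact m"
  by (metis norm_of_nat of_nat_fact)

lemma classF_coef:
  assumes "f \<in> classF" "2 \<le> k"
  shows "norm ((deriv ^^ k) f 0) \<le> real k * fact k"
proof -
  have "norm ((deriv ^^ k) f 0 / of_nat (fact k)) \<le> real k" using assms by (auto simp: classF_def)
  moreover have "norm ((deriv ^^ k) f 0 / of_nat (fact k)) = norm ((deriv ^^ k) f 0) / fact k"
    by (simp add: norm_divide)
  ultimately show ?thesis by (simp add: divide_le_eq)
qed

lemma classF_bounds:
  assumes f: "f \<in> classF" and z: "norm z < 1"
  shows "norm (deriv f z - 1) \<le> (1 + norm z) / (1 - norm z)^3 - 1"
    and "norm (deriv (deriv f) z) \<le> qq (norm z)"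
proof -
  define \<rho> where "\<rho> = norm z"
  have \<rho>: "0 \<le> \<rho>" "\<rho> < 1" using z by (auto simp: \<rho>_def)
  define D where "D k = (deriv ^^ k) f 0" for k
  have hol: "f holomorphic_on ball 0 1" and d1: "deriv f 0 = 1" using f by (auto simp: classF_def)
  have hd: "deriv f holomorphic_on ball 0 1" by (rule holomorphic_deriv[OF hol]) auto
  have hdd: "deriv (deriv f) holomorphic_on ball 0 1" by (rule holomorphic_deriv[OF hd]) auto
  have zb: "z \<in> ball 0 1" using z by simp
  have coef: "norm (D k) \<le> real k * fact k" if "2 \<le> k" for k
    using classF_coef[OF f that] by (simp add: D_def)
  have s1: "(\<lambda>n. D (Suc n) / fact n * z ^ n) sums deriv f z"
    using holomorphic_power_series[OF hd zb] by (simp add: deriv_funpow_shift D_def)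
  have s1': "(\<lambda>n. D (Suc (Suc n)) / fact (Suc n) * z ^ Suc n) sums (deriv f z - 1)"
    using s1 sums_Suc_iff[of "\<lambda>n. D (Suc n) / fact n * z ^ n" "deriv f z - 1"] d1
    by (simp add: D_def)
  have b1: "(\<lambda>n. (real n + 1)^2 * \<rho> ^ n) sums ((1 + \<rho>) / (1 - \<rho>)^3)" by (rule sums_sq[OF \<rho>])
  have b1': "(\<lambda>n. (real (Suc n) + 1)^2 * \<rho> ^ Suc n) sums ((1 + \<rho>) / (1 - \<rho>)^3 - 1)"
    using b1 sums_Suc_iff[of "\<lambda>n. (real n + 1)^2 * \<rho> ^ n" "(1 + \<rho>) / (1 - \<rho>)^3 - 1"] by simp
  have t1: "norm (D (Suc (Suc n)) / fact (Suc n) * z ^ Suc n) \<le> (real (Suc n) + 1)^2 * \<rho> ^ Suc n" for n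
  proof -
    have "norm (D (Suc (Suc n))) \<le> real (Suc (Suc n)) * fact (Suc (Suc n))" by (rule coef) simp
    also have "\<dots> = (real (Suc n) + 1)^2 * fact (Suc n)" by (simp add: power2_eq_square algebra_simps)
    finally have "norm (D (Suc (Suc n))) / fact (Suc n) \<le> (real (Suc n) + 1)^2"
      by (simp add: divide_le_eq)
    hence "norm (D (Suc (Suc n))) / fact (Suc n) * \<rho> ^ Suc n \<le> (real (Suc n) + 1)^2 * \<rho> ^ Suc n"
      using \<rho> by (intro mult_right_mono) auto
    thus ?thesis by (simp only: norm_mult norm_divide norm_power norm_fact_complex \<rho>_def)
  qed
  have "norm (deriv f z - 1) \<le> (1 + \<rho>) / (1 - \<rho>)^3 - 1"
    using norm_suminf_le[OF t1 sums_summable[OF b1']] sums_unique[OF s1'] sums_unique[OF b1'] by simp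
  thus "norm (deriv f z - 1) \<le> (1 + norm z) / (1 - norm z)^3 - 1" by (simp add: \<rho>_def)
  have s2: "(\<lambda>n. D (Suc (Suc n)) / fact n * z ^ n) sums deriv (deriv f) z"
    using holomorphic_power_series[OF hdd zb] by (simp add: deriv_funpow_shift D_def)
  have b2: "(\<lambda>n. (real n + 2)^2 * (real n + 1) * \<rho> ^ n) sums ((4 + 2 * \<rho>) / (1 - \<rho>)^4)"
    by (rule sums_cub[OF \<rho>])
  have t2: "norm (D (Suc (Suc n)) / fact n * z ^ n) \<le> (real n + 2)^2 * (real n + 1) * \<rho> ^ n" for n
  proof -
    have "norm (D (Suc (Suc n))) \<le> real (Suc (Suc n)) * fact (Suc (Suc n))" by (rule coef) simp
    also have "\<dots> = (real n + 2)^2 * (real n + 1) * fact n" by (simp add: power2_eq_square algebra_simps)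
    finally have "norm (D (Suc (Suc n))) / fact n \<le> (real n + 2)^2 * (real n + 1)"
      by (simp add: divide_le_eq)
    hence "norm (D (Suc (Suc n))) / fact n * \<rho> ^ n \<le> (real n + 2)^2 * (real n + 1) * \<rho> ^ n"
      using \<rho> by (intro mult_right_mono) auto
    thus ?thesis by (simp only: norm_mult norm_divide norm_power norm_fact_complex \<rho>_def)
  qed
  have "norm (deriv (deriv f) z) \<le> (4 + 2 * \<rho>) / (1 - \<rho>)^4"
    using norm_suminf_le[OF t2 sums_summable[OF b2]] sums_unique[OF s2] sums_unique[OF b2] by simp
  thus "norm (deriv (deriv f) z) \<le> qq (norm z)" by (simp add: \<rho>_def qq_def)
qed

lemma classF_deriv_lower:
  assumes "f \<in> classF" "norm z < 1"
  shows "pp (norm z) \<le> norm (deriv f z)"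
proof -
  have "1 - norm (deriv f z) \<le> norm (deriv f z - 1)"
    using norm_triangle_ineq2[of 1 "deriv f z"] by (simp add: norm_minus_commute)
  thus ?thesis using classF_bounds(1)[OF assms] unfolding pp_def by linarith
qed



lemma bound_main:
  assumes f: "f \<in> classF" and a: "0 \<le> a" "a < 1" and z: "norm z \<le> r0 a"
  shows "deriv f z \<noteq> 0" and "norm (z * deriv (deriv f) z / deriv f z) \<le> 1 - a"
    and "norm z < r0 a \<Longrightarrow> norm (z * deriv (deriv f) z / deriv f z) < 1 - a"
proof -
  define \<rho> where "\<rho> = norm z"
  have r: "0 < r0 a" "r0 a < 1" using r0_props[OF a] by auto
  have \<rho>: "0 \<le> \<rho>" "\<rho> < 1" "\<rho> \<le> r0 a" using z r by (auto simp: \<rho>_def)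
  have g: "0 \<le> gg a \<rho>" using r0_iff_le(1)[OF a, of \<rho>] \<rho> by auto
  have pp: "0 < pp \<rho>" using pq_le(3)[OF a \<rho>(1,2) g] .
  have pq: "\<rho> * qq \<rho> \<le> (1 - a) * pp \<rho>" using pq_le(1)[OF a \<rho>(1,2)] g by auto
  have z1: "norm z < 1" using \<rho> by (simp add: \<rho>_def)
  have d1: "pp \<rho> \<le> norm (deriv f z)" using classF_deriv_lower[OF f z1] by (simp add: \<rho>_def)
  have d2: "norm (deriv (deriv f) z) \<le> qq \<rho>" using classF_bounds(2)[OF f z1] by (simp add: \<rho>_def)
  have np: "0 < norm (deriv f z)" using pp d1 by linarith
  thus "deriv f z \<noteq> 0" by auto
  have eq: "norm (z * deriv (deriv f) z / deriv f z) = \<rho> * norm (deriv (deriv f) z) / norm (deriv f z)"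
    by (simp add: norm_mult norm_divide \<rho>_def)
  have A: "\<rho> * norm (deriv (deriv f) z) \<le> \<rho> * qq \<rho>" using d2 \<rho> by (intro mult_left_mono) auto
  have B: "(1 - a) * pp \<rho> \<le> (1 - a) * norm (deriv f z)" using d1 a by (intro mult_left_mono) auto
  have "\<rho> * norm (deriv (deriv f) z) \<le> (1 - a) * norm (deriv f z)" using A B pq by linarith
  thus "norm (z * deriv (deriv f) z / deriv f z) \<le> 1 - a" using np eq by (simp add: divide_le_eq)
  assume "norm z < r0 a"
  hence g': "0 < gg a \<rho>" using r0_iff_le(2)[OF a, of \<rho>] \<rho> by (auto simp: \<rho>_def)
  have pq': "\<rho> * qq \<rho> < (1 - a) * pp \<rho>" using pq_le(2)[OF a \<rho>(1,2)] g' by auto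
  have "\<rho> * norm (deriv (deriv f) z) < (1 - a) * norm (deriv f z)" using A B pq' by linarith
  thus "norm (z * deriv (deriv f) z / deriv f z) < 1 - a" using np eq by (simp add: divide_less_eq)
qed

lemma extremal:
  assumes a: "0 \<le> a" "a < 1" and y: "r0 a < y" "y \<le> 1"
  shows "\<exists>x. 0 < x \<and> x < y \<and> x < 1 \<and> deriv FF (of_real x) \<noteq> 0 \<and>
     of_real x * deriv (deriv FF) (of_real x) / deriv FF (of_real x) = of_real (- (x * qq x / pp x)) \<and>
     1 - a < x * qq x / pp x"
proof -
  have r: "0 < r0 a" "r0 a < 1" using r0_props[OF a] by auto
  have rs: "r0 a < 1/10" by (rule r0_small[OF a])
  define x where "x = min ((r0 a + y) / 2) (1/10)"
  have x1: "x \<le> (r0 a + y) / 2" "x \<le> 1/10" "x = (r0 a + y)/2 \<or> x = 1/10" by (auto simp: x_def min_def)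
  have x: "r0 a < x" "x < y" "0 < x" "x \<le> 1/10" "x < 1" using r rs y x1 by auto
  have p: "0 < pp x" using pp_pos_small[of x] x by auto
  have "\<not> 0 \<le> gg a x" using r0_iff_le(1)[OF a, of x] x by auto
  hence "\<not> x * qq x \<le> (1 - a) * pp x" using pq_le(1)[OF a, of x] x by auto
  hence lt: "1 - a < x * qq x / pp x" using p by (simp add: less_divide_eq)
  have n: "norm (complex_of_real x) < 1" using x by simp
  have d1: "deriv FF (of_real x) = of_real (pp x)" using deriv_FF[OF n] F12_real[of x] x by simp
  have d2: "deriv (deriv FF) (of_real x) = - of_real (qq x)" using deriv2_FF[OF n] F12_real[of x] x by simp
  have "deriv FF (of_real x) \<noteq> 0" using d1 p by simp
  moreover have "of_real x * deriv (deriv FF) (of_real x) / deriv FF (of_real x) = of_real (- (x * qq x / pp x))"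
    using d1 d2 by simp
  ultimately show ?thesis using x lt by blast
qed

theorem corollary3p2:
  fixes \<alpha> :: real
  assumes "0 \<le> \<alpha>" and "\<alpha> < 1"
  shows "(\<forall>f\<in>classF. \<forall>z. norm z \<le> r0 \<alpha> \<longrightarrow>
            norm (z * deriv (deriv f) z / deriv f z) \<le> 1 - \<alpha>)
       \<and> (\<forall>r. r0 \<alpha> < r \<and> r \<le> 1 \<longrightarrow> (\<exists>f\<in>classF. \<exists>z. norm z < r \<and>
            norm (z * deriv (deriv f) z / deriv f z) > 1 - \<alpha>))
       \<and> radius_convexity_order classF \<alpha> = r0 \<alpha>
       \<and> radius_uniform_convexity classF = r0 (1/2)
       \<and> 0.0647225 < r0 (1/2) \<and> r0 (1/2) < 0.0647235"
proof (intro conjI)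
  note a = assms
  show "\<forall>f\<in>classF. \<forall>z. norm z \<le> r0 \<alpha> \<longrightarrow> norm (z * deriv (deriv f) z / deriv f z) \<le> 1 - \<alpha>"
    using bound_main(2)[OF _ a] by blast
  show "\<forall>r. r0 \<alpha> < r \<and> r \<le> 1 \<longrightarrow> (\<exists>f\<in>classF. \<exists>z. norm z < r \<and>
            norm (z * deriv (deriv f) z / deriv f z) > 1 - \<alpha>)"
  proof (intro allI impI)
    fix r assume "r0 \<alpha> < r \<and> r \<le> 1"
    then obtain x where x: "0 < x" "x < r"
      "of_real x * deriv (deriv FF) (of_real x) / deriv FF (of_real x) = of_real (- (x * qq x / pp x))"
      "1 - \<alpha> < x * qq x / pp x"
      using extremal[OF a] by blast
    have "norm (complex_of_real x) < r" using x by simp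
    moreover have "1 - \<alpha> < norm (of_real x * deriv (deriv FF) (of_real x) / deriv FF (of_real x))"
      using x a by (simp only: x(3) norm_of_real; simp)
    ultimately show "\<exists>f\<in>classF. \<exists>z. norm z < r \<and> norm (z * deriv (deriv f) z / deriv f z) > 1 - \<alpha>"
      using FF_in by blast
  qed
  have r: "0 < r0 \<alpha>" "r0 \<alpha> < 1" using r0_props[OF a] by auto
  show "radius_convexity_order classF \<alpha> = r0 \<alpha>"
    unfolding radius_convexity_order_def
  proof (rule cSup_eq_maximum)
    show "r0 \<alpha> \<in> {r \<in> {0<..1}. \<forall>f\<in>classF. \<forall>z\<in>ball 0 r.
       deriv f z \<noteq> 0 \<and> \<alpha> < Re (1 + z * deriv (deriv f) z / deriv f z)}"
    proof (intro CollectI conjI ballI)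
      show "r0 \<alpha> \<in> {0<..1}" using r by auto
      fix f and z :: complex assume f: "f \<in> classF" and z: "z \<in> ball 0 (r0 \<alpha>)"
      hence zn: "norm z < r0 \<alpha>" by simp
      show "deriv f z \<noteq> 0" using bound_main(1)[OF f a] zn by simp
      have "norm (z * deriv (deriv f) z / deriv f z) < 1 - \<alpha>" using bound_main(3)[OF f a] zn by simp
      moreover have "- Re (z * deriv (deriv f) z / deriv f z) \<le> norm (z * deriv (deriv f) z / deriv f z)"
        using abs_Re_le_cmod[of "z * deriv (deriv f) z / deriv f z"] by linarith
      ultimately show "\<alpha> < Re (1 + z * deriv (deriv f) z / deriv f z)" by simp
    qed
  next
    fix y assume "y \<in> {r \<in> {0<..1}. \<forall>f\<in>classF. \<forall>z\<in>ball 0 r.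
       deriv f z \<noteq> 0 \<and> \<alpha> < Re (1 + z * deriv (deriv f) z / deriv f z)}"
    hence y: "0 < y" "y \<le> 1" and P: "\<forall>z\<in>ball 0 y. \<alpha> < Re (1 + z * deriv (deriv FF) z / deriv FF z)"
      using FF_in by auto
    show "y \<le> r0 \<alpha>"
    proof (rule ccontr)
      assume "\<not> y \<le> r0 \<alpha>"
      then obtain x where x: "0 < x" "x < y"
        "of_real x * deriv (deriv FF) (of_real x) / deriv FF (of_real x) = of_real (- (x * qq x / pp x))"
        "1 - \<alpha> < x * qq x / pp x"
        using extremal[OF a, of y] y by auto
      have "complex_of_real x \<in> ball 0 y" using x by simp
      from P[rule_format, OF this] have "\<alpha> < 1 - x * qq x / pp x" by (simp only: x(3); simp)
      thus False using x by linarith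
    qed
  qed
  have h: "0 \<le> (1/2::real)" "(1/2::real) < 1" by auto
  have r': "0 < r0 (1/2)" "r0 (1/2) < 1" using r0_props[OF h] by auto
  show "radius_uniform_convexity classF = r0 (1/2)"
    unfolding radius_uniform_convexity_def
  proof (rule cSup_eq_maximum)
    show "r0 (1/2) \<in> {r \<in> {0<..1}. \<forall>f\<in>classF. \<forall>z\<in>ball 0 r. deriv f z \<noteq> 0 \<and>
       norm (z * deriv (deriv f) z / deriv f z) < Re (1 + z * deriv (deriv f) z / deriv f z)}"
    proof (intro CollectI conjI ballI)
      show "r0 (1/2) \<in> {0<..1}" using r' by auto
      fix f and z :: complex assume f: "f \<in> classF" and z: "z \<in> ball 0 (r0 (1/2))"
      hence zn: "norm z < r0 (1/2)" by simp
      show "deriv f z \<noteq> 0" using bound_main(1)[OF f h] zn by simp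
      have "norm (z * deriv (deriv f) z / deriv f z) < 1 - 1/2" using bound_main(3)[OF f h] zn by simp
      moreover have "- Re (z * deriv (deriv f) z / deriv f z) \<le> norm (z * deriv (deriv f) z / deriv f z)"
        using abs_Re_le_cmod[of "z * deriv (deriv f) z / deriv f z"] by linarith
      ultimately show "norm (z * deriv (deriv f) z / deriv f z) < Re (1 + z * deriv (deriv f) z / deriv f z)"
        by simp
    qed
  next
    fix y assume "y \<in> {r \<in> {0<..1}. \<forall>f\<in>classF. \<forall>z\<in>ball 0 r. deriv f z \<noteq> 0 \<and>
       norm (z * deriv (deriv f) z / deriv f z) < Re (1 + z * deriv (deriv f) z / deriv f z)}"
    hence y: "0 < y" "y \<le> 1" and P: "\<forall>z\<in>ball 0 y.
       norm (z * deriv (deriv FF) z / deriv FF z) < Re (1 + z * deriv (deriv FF) z / deriv FF z)"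
      using FF_in by auto
    show "y \<le> r0 (1/2)"
    proof (rule ccontr)
      assume "\<not> y \<le> r0 (1/2)"
      then obtain x where x: "0 < x" "x < y"
        "of_real x * deriv (deriv FF) (of_real x) / deriv FF (of_real x) = of_real (- (x * qq x / pp x))"
        "1 - 1/2 < x * qq x / pp x"
        using extremal[OF h, of y] y by auto
      have "complex_of_real x \<in> ball 0 y" using x by simp
      from P[rule_format, OF this] have "\<bar>x * qq x / pp x\<bar> < 1 - x * qq x / pp x"
        by (simp only: x(3) norm_of_real; simp)
      thus False using x(4) by (auto simp: abs_if split: if_splits)
    qed
  qed
  show "0.0647225 < r0 (1/2)" "r0 (1/2) < 0.0647235" using r0_half by auto
qed

end
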